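(* Let $m,d,k\ge1$ be integers. If the hypergrid $\mathcal{H}_{m,d}$ has a Steiner $k$-TC-spanner $H$, then it also has a (non-Steiner) $k$-TC-spanner with at most as many edges as $H$.
   Context: $\mathcal{H}_{m,d}$ is the directed graph on $[m]^d$ with an edge $(x,y)$ whenever $y$ and $x$ differ in exactly one coordinate $i$ with $y_i-x_i=1$. For a directed graph $G=(V,E)$, a $k$-TC-spanner is a graph $H=(V,E_H)$ with $E_H$ contained in the transitive closure of $G$ such that whenever $v$ is reachable from $u$ in $G$, $H$ has a path from $u$ to $v$ of length at most $k$. A Steiner $k$-TC-spanner is a directed graph $H=(V_H,E_H)$ with $V\subseteq V_H$ such that for all $u,v\in V$: if $v$ is reachable from $u$ in $G$ then $H$ has a path from $u$ to $v$ of length at most $k$, and otherwise $v$ is not reachable from $u$ in $H$. *)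

theory Defs
  imports Main "HOL-Library.Equipollence"
begin

definition hgrid_vertices :: "nat \<Rightarrow> nat \<Rightarrow> nat list set" where
  "hgrid_vertices m d = {x. length x = d \<and> set x \<subseteq> {1..m}}"

definition hgrid_edges :: "nat \<Rightarrow> nat \<Rightarrow> (nat list \<times> nat list) set" where
  "hgrid_edges m d = {(x, y). x \<in> hgrid_vertices m d \<and> y \<in> hgrid_vertices m d \<and>
      (\<exists>i<d. y ! i = x ! i + 1 \<and> (\<forall>j<d. j \<noteq> i \<longrightarrow> y ! j = x ! j))}"

definition is_TC_spanner :: "'a set \<Rightarrow> ('a \<times> 'a) set \<Rightarrow> nat \<Rightarrow> ('a \<times> 'a) set \<Rightarrow> bool" where
  "is_TC_spanner V E k EH \<longleftrightarrow>
     EH \<subseteq> E\<^sup>+ \<and>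
     (\<forall>u\<in>V. \<forall>v\<in>V. (u, v) \<in> E\<^sup>* \<longrightarrow> (\<exists>j\<le>k. (u, v) \<in> EH ^^ j))"

text \<open>A Steiner k-TC-spanner of (V,E): a digraph on a vertex type containing V (embedded via Inl;
  the Inr vertices are the Steiner vertices) such that reachable pairs of V are joined by paths of
  length at most k and non-reachable pairs of V remain non-reachable.\<close>
definition is_Steiner_TC_spanner ::
  "'a set \<Rightarrow> ('a \<times> 'a) set \<Rightarrow> nat \<Rightarrow> (('a + 'b) \<times> ('a + 'b)) set \<Rightarrow> bool" where
  "is_Steiner_TC_spanner V E k EH \<longleftrightarrow>
     (\<forall>u\<in>V. \<forall>v\<in>V.
        ((u, v) \<in> E\<^sup>* \<longrightarrow> (\<exists>j\<le>k. (Inl u, Inl v) \<in> EH ^^ j)) \<and>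
        ((u, v) \<notin> E\<^sup>* \<longrightarrow> (Inl u, Inl v) \<notin> EH\<^sup>*))"

end

theory Submission
  imports Defs
begin

lemma hg_fin: "finite (hgrid_vertices m d)"
proof -
  have "hgrid_vertices m d \<subseteq> {xs. set xs \<subseteq> {1..m} \<and> length xs = d}"
    unfolding hgrid_vertices_def by auto
  moreover have "finite {xs. set xs \<subseteq> {1..m} \<and> length xs = d}"
    by (rule finite_lists_length_eq) simp
  ultimately show ?thesis by (rule finite_subset)
qed

lemma hg_le: "(u, v) \<in> (hgrid_edges m d)\<^sup>* \<Longrightarrow> i < d \<Longrightarrow> u ! i \<le> v ! i"
proof (induction rule: rtrancl_induct)
  case base then show ?case by simp
next
  case (step y z)
  from step(2) obtain l where "l<d" "z ! l = y ! l + 1" "\<forall>j<d. j \<noteq> l \<longrightarrow> z ! j = y ! j"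
    unfolding hgrid_edges_def by auto
  then have "y ! i \<le> z ! i" using step(4) by (cases "i = l") auto
  then show ?case using step by simp
qed

lemma hg_reach:
  assumes "u \<in> hgrid_vertices m d" "v \<in> hgrid_vertices m d" "\<forall>i<d. u ! i \<le> v ! i"
  shows "(u, v) \<in> (hgrid_edges m d)\<^sup>*"
  using assms
proof (induction "\<Sum>i<d. v ! i - u ! i" arbitrary: u rule: less_induct)
  case less
  show ?case
  proof (cases "\<forall>i<d. u ! i = v ! i")
    case True
    then have "u = v" using less.prems unfolding hgrid_vertices_def
      by (auto intro: nth_equalityI)
    then show ?thesis by simp
  next
    case False
    then obtain l where l: "l < d" "u ! l < v ! l" using less.prems(3)
      by (meson le_neq_implies_less)
    define u' where "u' = u[l := u ! l + 1]"
    have lu: "length u = d" "length v = d" "set u \<subseteq> {1..m}" "set v \<subseteq> {1..m}"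
      using less.prems unfolding hgrid_vertices_def by auto
    have vl: "v ! l \<le> m" using lu l by (metis atLeastAtMost_iff nth_mem subsetD)
    have u'V: "u' \<in> hgrid_vertices m d"
      unfolding hgrid_vertices_def u'_def using lu l vl
      by (auto simp: set_update_subset_insert[THEN subsetD] dest!: set_update_subset_insert[THEN subsetD])
    have e: "(u, u') \<in> hgrid_edges m d"
      unfolding hgrid_edges_def using u'V less.prems(1) l lu by (auto simp: u'_def)
    have le': "\<forall>i<d. u' ! i \<le> v ! i" using less.prems(3) l lu
      by (auto simp: u'_def nth_list_update)
    have "(\<Sum>i<d. v ! i - u' ! i) < (\<Sum>i<d. v ! i - u ! i)"
    proof (rule sum_strict_mono_ex1)
      show "\<forall>i\<in>{..<d}. v ! i - u' ! i \<le> v ! i - u ! i" using lu l by (auto simp: u'_def nth_list_update split: if_splits)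
      show "\<exists>i\<in>{..<d}. v ! i - u' ! i < v ! i - u ! i" using l lu by (intro bexI[of _ l]) (auto simp: u'_def)
    qed simp
    then have "(u', v) \<in> (hgrid_edges m d)\<^sup>*" using less.hyps u'V less.prems(2) le' by blast
    then show ?thesis using e by (meson converse_rtrancl_into_rtrancl)
  qed
qed

definition J :: "nat \<Rightarrow> nat list set \<Rightarrow> nat list" where
  "J d A = map (\<lambda>i. Max ((\<lambda>u. u ! i) ` A)) [0..<d]"

lemma J_V: assumes "A \<subseteq> hgrid_vertices m d" "A \<noteq> {}"
  shows "J d A \<in> hgrid_vertices m d"
proof -
  have fin: "finite A" using assms(1) hg_fin finite_subset by blast
  have "Max ((\<lambda>u. u ! i) ` A) \<in> {1..m}" if "i < d" for i
  proof -
    have "Max ((\<lambda>u. u ! i) ` A) \<in> (\<lambda>u. u ! i) ` A" using fin assms(2) by (intro Max_in) auto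
    then obtain u where "u \<in> A" "Max ((\<lambda>u. u ! i) ` A) = u ! i" by auto
    moreover have "u ! i \<in> set u" using \<open>u \<in> A\<close> assms(1) that unfolding hgrid_vertices_def by auto
    moreover have "set u \<subseteq> {1..m}" using \<open>u \<in> A\<close> assms(1) unfolding hgrid_vertices_def by auto
    ultimately show ?thesis by auto
  qed
  then show ?thesis unfolding hgrid_vertices_def J_def by auto
qed

lemma J_ub: assumes "A \<subseteq> hgrid_vertices m d" "u \<in> A" "i < d"
  shows "u ! i \<le> J d A ! i"
proof -
  have fin: "finite A" using assms(1) hg_fin finite_subset by blast
  show ?thesis using assms fin unfolding J_def by auto
qed

lemma J_least: assumes "A \<subseteq> hgrid_vertices m d" "A \<noteq> {}" "i < d" "\<forall>u\<in>A. u ! i \<le> w ! i"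
  shows "J d A ! i \<le> w ! i"
proof -
  have fin: "finite A" using assms(1) hg_fin finite_subset by blast
  show ?thesis using assms fin unfolding J_def by auto
qed

theorem corollary2:
  fixes m d k :: nat and EH :: "((nat list + 'b) \<times> (nat list + 'b)) set"
  assumes "m \<ge> 1" and "d \<ge> 1" and "k \<ge> 1"
    and "is_Steiner_TC_spanner (hgrid_vertices m d) (hgrid_edges m d) k EH"
  shows "\<exists>EH'. is_TC_spanner (hgrid_vertices m d) (hgrid_edges m d) k EH' \<and> EH' \<lesssim> EH"
proof -
  define V where "V = hgrid_vertices m d"
  define E where "E = hgrid_edges m d"
  have St: "\<And>u v. u \<in> V \<Longrightarrow> v \<in> V \<Longrightarrow> (u, v) \<in> E\<^sup>* \<Longrightarrow> (\<exists>j\<le>k. (Inl u, Inl v) \<in> EH ^^ j)"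
    and St2: "\<And>u v. u \<in> V \<Longrightarrow> v \<in> V \<Longrightarrow> (Inl u, Inl v) \<in> EH\<^sup>* \<Longrightarrow> (u, v) \<in> E\<^sup>*"
    using assms(4) unfolding is_Steiner_TC_spanner_def V_def E_def by blast+
  define In where "In a = {u \<in> V. (Inl u, a) \<in> EH\<^sup>*}" for a
  define Out where "Out a = {v \<in> V. (a, Inl v) \<in> EH\<^sup>*}" for a
  define \<phi> where "\<phi> a = J d (In a)" for a
  define Rel where "Rel = {(a, b). (a, b) \<in> EH \<and> In a \<noteq> {} \<and> Out b \<noteq> {}}"
  define EH' where "EH' = {(\<phi> a, \<phi> b) | a b. (a, b) \<in> Rel \<and> \<phi> a \<noteq> \<phi> b}"
  have InV: "In a \<subseteq> V" for a unfolding In_def by auto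
  have In_mono: "In a \<subseteq> In b" if "(a, b) \<in> EH\<^sup>*" for a b
    using that unfolding In_def by (auto intro: rtrancl_trans)
  have Out_mono: "Out b \<subseteq> Out a" if "(a, b) \<in> EH\<^sup>*" for a b
    using that unfolding Out_def by (auto intro: rtrancl_trans)
  have phiV: "\<phi> a \<in> V" if "In a \<noteq> {}" for a
    unfolding \<phi>_def V_def using J_V InV that V_def by metis
  have phi_Inl: "\<phi> (Inl x) = x" if "x \<in> V" for x
  proof -
    have xin: "x \<in> In (Inl x)" using that unfolding In_def by auto
    have le: "\<forall>u\<in>In (Inl x). u ! i \<le> x ! i" if "i < d" for i
    proof
      fix u assume "u \<in> In (Inl x)"
      then have "(u, x) \<in> E\<^sup>*" using St2 \<open>x \<in> V\<close> unfolding In_def by auto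
      then show "u ! i \<le> x ! i" using hg_le that unfolding E_def by blast
    qed
    have "\<phi> (Inl x) ! i = x ! i" if "i < d" for i
      using J_ub[OF InV[unfolded V_def] xin that] J_least[OF InV[unfolded V_def] _ that le[OF that]] xin
      unfolding \<phi>_def by fastforce
    moreover have "length (\<phi> (Inl x)) = length x" using that unfolding \<phi>_def J_def V_def hgrid_vertices_def by simp
    ultimately show ?thesis using that unfolding V_def hgrid_vertices_def by (auto intro: nth_equalityI)
  qed
  have edge: "(\<phi> a, \<phi> b) \<in> E\<^sup>*" if "(a, b) \<in> Rel" for a b
  proof -
    have ab: "(a, b) \<in> EH" "In a \<noteq> {}" using that unfolding Rel_def by auto
    have sub: "In a \<subseteq> In b" using ab In_mono by blast
    have "\<phi> a ! i \<le> \<phi> b ! i" if "i < d" for i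
      unfolding \<phi>_def
      by (rule J_least[OF InV[unfolded V_def] ab(2) that]) (use J_ub[OF InV[unfolded V_def] _ that] sub in blast)
    then show ?thesis unfolding E_def using hg_reach phiV ab sub V_def by (metis subset_empty)
  qed
  have part1: "EH' \<subseteq> E\<^sup>+"
    using edge unfolding EH'_def by (auto simp: rtrancl_eq_or_trancl)
  have path: "\<exists>j'\<le>j. (\<phi> a, \<phi> b) \<in> EH' ^^ j'"
    if "(a, b) \<in> EH ^^ j" "In a \<noteq> {}" "Out b \<noteq> {}" for j a b
    using that
  proof (induction j arbitrary: b)
    case 0 then show ?case by auto
  next
    case (Suc j)
    then obtain c where c: "(a, c) \<in> EH ^^ j" "(c, b) \<in> EH" by auto
    have "Out c \<noteq> {}" using Out_mono[of c b] c(2) Suc.prems(3) by blast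
    then obtain j' where j': "j' \<le> j" "(\<phi> a, \<phi> c) \<in> EH' ^^ j'" using Suc.IH c(1) Suc.prems(2) by blast
    have "In c \<noteq> {}" using In_mono[of a c] c(1) Suc.prems(2) relpow_imp_rtrancl by blast
    then have cb: "(c, b) \<in> Rel" using c(2) Suc.prems(3) unfolding Rel_def by auto
    show ?case
    proof (cases "\<phi> c = \<phi> b")
      case True then show ?thesis using j' by (intro exI[of _ j']) auto
    next
      case False
      then have "(\<phi> c, \<phi> b) \<in> EH'" using cb unfolding EH'_def by auto
      then have "(\<phi> a, \<phi> b) \<in> EH' ^^ Suc j'" using j' by auto
      then show ?thesis using j' by (intro exI[of _ "Suc j'"]) auto
    qed
  qed
  have part2: "\<exists>j\<le>k. (u, v) \<in> EH' ^^ j" if uv: "u \<in> V" "v \<in> V" "(u, v) \<in> E\<^sup>*" for u v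
  proof -
    obtain j where j: "j \<le> k" "(Inl u, Inl v) \<in> EH ^^ j" using St uv by blast
    have "In (Inl u) \<noteq> {}" "Out (Inl v) \<noteq> {}" using uv unfolding In_def Out_def by auto
    then obtain j' where "j' \<le> j" "(\<phi> (Inl u), \<phi> (Inl v)) \<in> EH' ^^ j'" using path j(2) by blast
    then show ?thesis using phi_Inl uv j(1) by (intro exI[of _ j']) auto
  qed
  have part3: "EH' \<lesssim> EH"
  proof (rule subset_image_lepoll)
    show "EH' \<subseteq> (\<lambda>(a, b). (\<phi> a, \<phi> b)) ` EH"
      unfolding EH'_def Rel_def by force
  qed
  show ?thesis
    using part1 part2 part3 unfolding is_TC_spanner_def V_def E_def by blast
qed

end
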